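(* Let $V_1,V_2$ be closed subspaces of a Hilbert space $\mathcal H$, neither of which contains the other, and let $\varepsilon=\cos\angle(V_1,V_2)<1$. Let $M=\begin{pmatrix}1&-\varepsilon\\-\varepsilon&1\end{pmatrix}$. For $w\in\mathcal H$ let $d_0(w),d_1(w),d_2(w)$ be the distances from $w$ to $V_1\cap V_2$, $V_1$, $V_2$, and let $w_1=P_{V_1}(w)$, $w_2=P_{V_2}(w)$, $w_{12}=P_{\overline{V_1+V_2}}(w)$. Then for every $w\in\mathcal H$: (a) $d_0(w)^2\le\begin{pmatrix}d_1(w)&d_2(w)\end{pmatrix}M^{-1}\begin{pmatrix}d_1(w)\\d_2(w)\end{pmatrix}$; (b) $\|w_{12}\|^2\le\begin{pmatrix}\|w_1\|&\|w_2\|\end{pmatrix}M^{-1}\begin{pmatrix}\|w_1\|\\\|w_2\|\end{pmatrix}$.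
   Context: $P_V$ denotes orthogonal projection onto a closed subspace $V$; $\overline{V_1+V_2}$ is the closure of $V_1+V_2$. For closed subspaces $V_1,V_2$ neither of which contains the other, the (Friederichs) angle $\angle(V_1,V_2)\in[0,\pi/2]$ is defined by $\cos\angle(V_1,V_2)=\sup\{|\langle v_1,v_2\rangle| : v_i\in V_i,\ \|v_i\|=1,\ v_i\perp V_1\cap V_2\}$. *)

theory Defs
  imports "HOL-Analysis.Analysis"
begin

definition closed_subspace :: "'a::real_inner set \<Rightarrow> bool" where
  "closed_subspace V \<longleftrightarrow> subspace V \<and> closed V"

definition orth_proj :: "'a::real_inner set \<Rightarrow> 'a \<Rightarrow> 'a" where
  "orth_proj V w = (THE v. v \<in> V \<and> (\<forall>u\<in>V. inner (w - v) u = 0))"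

definition cos_angle :: "'a::real_inner set \<Rightarrow> 'a set \<Rightarrow> real" where
  "cos_angle V1 V2 = Sup {\<bar>inner v1 v2\<bar> | v1 v2.
      v1 \<in> V1 \<and> v2 \<in> V2 \<and> norm v1 = 1 \<and> norm v2 = 1 \<and>
      (\<forall>u\<in>V1 \<inter> V2. inner v1 u = 0) \<and> (\<forall>u\<in>V1 \<inter> V2. inner v2 u = 0)}"

definition Mmat :: "real \<Rightarrow> real^2^2" where
  "Mmat e = vector [vector [1, - e], vector [- e, 1]]"

definition qform_inv :: "real \<Rightarrow> real \<Rightarrow> real \<Rightarrow> real" where
  "qform_inv e a b = (vector [a, b] :: real^2) \<bullet> (matrix_inv (Mmat e) *v vector [a, b])"

end

theory Submission
  imports Defs
begin
lemma Mmat_entries: "Mmat e $ 1 $ 1 = 1" "Mmat e $ 1 $ 2 = -e" "Mmat e $ 2 $ 1 = -e" "Mmat e $ 2 $ 2 = 1"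
  by (simp_all add: Mmat_def)

lemma qform_inv_eq:
  fixes e a b :: real
  assumes "\<bar>e\<bar> < 1"
  shows "qform_inv e a b = (a\<^sup>2 + 2*e*a*b + b\<^sup>2) / (1 - e\<^sup>2)"
proof -
  define D where "D = 1 - e\<^sup>2"
  have den: "D \<noteq> 0" unfolding D_def using assms abs_square_less_1 by force
  have den2: "e * e \<noteq> 1" using den by (simp add: D_def power2_eq_square)
  define N :: "real^2^2" where "N = (\<chi> i j. if i = j then 1/D else e/D)"
  have N: "N $ 1 $ 1 = 1/D" "N $ 1 $ 2 = e/D" "N $ 2 $ 1 = e/D" "N $ 2 $ 2 = 1/D"
    by (simp_all add: N_def)
  have MN: "Mmat e ** N = mat 1"
    unfolding matrix_matrix_mult_def mat_def
    by (simp add: vec_eq_iff forall_2 sum_2 Mmat_entries N) (use den2 in \<open>simp add: D_def divide_simps power2_eq_square\<close>)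
  have NM: "N ** Mmat e = mat 1"
    unfolding matrix_matrix_mult_def mat_def
    by (simp add: vec_eq_iff forall_2 sum_2 Mmat_entries N) (use den2 in \<open>simp add: D_def divide_simps power2_eq_square\<close>)
  have inv: "Mmat e ** matrix_inv (Mmat e) = mat 1"
    unfolding matrix_inv_def by (rule someI2[of _ N]) (use MN NM in auto)
  have "matrix_inv (Mmat e) = N"
    by (metis NM inv matrix_mul_assoc matrix_mul_lid matrix_mul_rid)
  then have "qform_inv e a b = a * (a/D + e*b/D) + b * (e*a/D + b/D)"
    unfolding qform_inv_def 
    by (simp add: inner_vec_def matrix_vector_mult_def sum_2 N)
  also have "\<dots> = (a\<^sup>2 + 2*e*a*b + b\<^sup>2) / D"
    using den by (simp add: divide_simps power2_eq_square) (simp add: algebra_simps)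
  finally show ?thesis by (simp add: D_def)
qed
lemma nsq_add: "(norm (x + y))\<^sup>2 = (norm x)\<^sup>2 + 2 * inner x y + (norm (y::'a::real_inner))\<^sup>2"
  by (simp add: power2_norm_eq_inner inner_simps inner_commute)

lemma nsq_diff: "(norm (x - y))\<^sup>2 = (norm x)\<^sup>2 - 2 * inner x y + (norm (y::'a::real_inner))\<^sup>2"
  by (simp add: power2_norm_eq_inner inner_simps inner_commute)

lemma proj_exists:
  fixes V :: "'a::{real_inner,complete_space} set"
  assumes cs: "closed_subspace V"
  shows "\<exists>v\<in>V. \<forall>u\<in>V. inner (w - v) u = 0"
proof -
  have sub: "subspace V" and cl: "closed V" using cs by (auto simp: closed_subspace_def)
  define F where "F = (\<lambda>v. (norm (w - v))\<^sup>2) ` V"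
  define D where "D = Inf F"
  have Fne: "F \<noteq> {}" using subspace_0[OF sub] by (auto simp: F_def)
  have Fbdd: "bdd_below F" unfolding F_def by (auto intro: bdd_belowI[of _ 0])
  have Dle: "D \<le> (norm (w - u))\<^sup>2" if "u \<in> V" for u
    unfolding D_def by (rule cInf_lower) (use that Fbdd F_def in auto)
  have "\<exists>v. v \<in> V \<and> (norm (w - v))\<^sup>2 < D + 1 / real (Suc n)" for n
  proof -
    have "Inf F < D + 1 / real (Suc n)" unfolding D_def by simp
    then obtain x where "x \<in> F" "x < D + 1 / real (Suc n)" using cInf_less_iff[OF Fne Fbdd] by blast
    then show ?thesis unfolding F_def by blast
  qed
  then obtain s where sV: "\<And>n. s n \<in> V" and sD: "\<And>n. (norm (w - s n))\<^sup>2 < D + 1 / real (Suc n)"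
    by metis
  have par: "(norm (s m - s n))\<^sup>2 \<le> 2 / real (Suc m) + 2 / real (Suc n)" for m n
  proof -
    have mid: "(1/2) *\<^sub>R (s m + s n) \<in> V" using sub sV by (simp add: subspace_add subspace_mul)
    have eq: "(w - s m) + (w - s n) = 2 *\<^sub>R (w - (1/2) *\<^sub>R (s m + s n))"
      by (simp add: algebra_simps scaleR_2)
    have "4 * D \<le> (norm ((w - s m) + (w - s n)))\<^sup>2"
      unfolding eq using Dle[OF mid] by (simp add: power2_eq_square)
    moreover have "(norm (s m - s n))\<^sup>2 = 2*(norm (w - s m))\<^sup>2 + 2*(norm (w - s n))\<^sup>2 - (norm ((w - s m) + (w - s n)))\<^sup>2"
    proof -
      have "s m - s n = (w - s n) - (w - s m)" by simp
      then show ?thesis by (simp only: nsq_add nsq_diff) (simp add: inner_commute)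
    qed
    ultimately show ?thesis using sD[of m] sD[of n] by linarith
  qed
  have "Cauchy s"
    unfolding Cauchy_def
  proof (intro allI impI)
    fix \<epsilon> :: real assume ep: "\<epsilon> > 0"
    obtain M where M: "4 / \<epsilon>\<^sup>2 < real M" using reals_Archimedean2 by blast
    have "dist (s m) (s n) < \<epsilon>" if "m \<ge> M" "n \<ge> M" for m n
    proof -
      have "2 / real (Suc m) \<le> 2 / real (Suc M)" "2 / real (Suc n) \<le> 2 / real (Suc M)"
        using that by (auto simp: divide_simps)
      moreover have "4 / real (Suc M) < \<epsilon>\<^sup>2"
        using M ep proof -
          have "0 < \<epsilon>\<^sup>2" using ep by simp
          moreover have "4 < real M * \<epsilon>\<^sup>2" using M \<open>0 < \<epsilon>\<^sup>2\<close> by (simp add: divide_simps)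
          ultimately have "4 < \<epsilon>\<^sup>2 + real M * \<epsilon>\<^sup>2" by linarith
          then have "4 < \<epsilon>\<^sup>2 * (1 + real M)" by (simp add: algebra_simps)
          then show ?thesis by (simp add: divide_simps)
        qed
      ultimately have "(norm (s m - s n))\<^sup>2 < \<epsilon>\<^sup>2" using par[of m n] by linarith
      then show ?thesis using ep by (simp add: dist_norm power_less_imp_less_base)
    qed
    then show "\<exists>M. \<forall>m\<ge>M. \<forall>n\<ge>M. dist (s m) (s n) < \<epsilon>" by blast
  qed
  then obtain v where lim: "s \<longlonglongrightarrow> v" using Cauchy_convergent_iff convergent_def by blast
  have vV: "v \<in> V" using closed_sequentially[OF cl sV lim] .
  have "(norm (w - v))\<^sup>2 \<le> D"
  proof (rule LIMSEQ_le)
    show "(\<lambda>n. (norm (w - s n))\<^sup>2) \<longlonglongrightarrow> (norm (w - v))\<^sup>2"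
      by (intro tendsto_intros lim)
    show "(\<lambda>n. D + 1 / real (Suc n)) \<longlonglongrightarrow> D"
      using tendsto_add[OF tendsto_const LIMSEQ_inverse_real_of_nat, of D]
      by (simp add: divide_inverse)
    show "\<exists>N. \<forall>n\<ge>N. (norm (w - s n))\<^sup>2 \<le> D + 1 / real (Suc n)"
      using sD less_imp_le by blast
  qed
  then have min: "(norm (w - v))\<^sup>2 \<le> (norm (w - u))\<^sup>2" if "u \<in> V" for u
    using Dle[OF that] by linarith
  have "inner (w - v) u = 0" if uV: "u \<in> V" for u
  proof (cases "u = 0")
    case True then show ?thesis by simp
  next
    case False
    define c where "c = inner (w - v) u"
    define U where "U = (norm u)\<^sup>2"
    have U: "U > 0" using False by (simp add: U_def)
    define t where "t = c / U"
    have "v + t *\<^sub>R u \<in> V" using sub vV uV by (simp add: subspace_add subspace_mul)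
    from min[OF this] have "(norm (w - v))\<^sup>2 \<le> (norm ((w - v) - t *\<^sub>R u))\<^sup>2"
      by (simp add: algebra_simps)
    also have "\<dots> = (norm (w - v))\<^sup>2 - 2 * t * c + t\<^sup>2 * U"
      by (simp only: nsq_diff) (simp add: c_def U_def power_mult_distrib)
    finally have "2 * t * c \<le> t\<^sup>2 * U" by simp
    then have "2 * c\<^sup>2 / U \<le> c\<^sup>2 / U" using U by (simp add: t_def power2_eq_square divide_simps)
    then have "c\<^sup>2 \<le> 0" using U by (simp add: divide_simps)
    then show ?thesis by (simp add: c_def)
  qed
  then show ?thesis using vV by blast
qed

lemma proj_unique:
  fixes V :: "'a::real_inner set"
  assumes "subspace V" "v \<in> V" "\<forall>u\<in>V. inner (w - v) u = 0" "v' \<in> V" "\<forall>u\<in>V. inner (w - v') u = 0"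
  shows "v = v'"
proof -
  have d: "v - v' \<in> V" using assms by (simp add: subspace_diff)
  have "inner (w - v') (v - v') - inner (w - v) (v - v') = 0" using assms(3,5) d by simp
  then have "inner (v - v') (v - v') = 0" by (simp add: inner_simps)
  then show ?thesis by simp
qed

lemma orth_proj:
  fixes V :: "'a::{real_inner,complete_space} set"
  assumes "closed_subspace V"
  shows "orth_proj V w \<in> V" "\<And>u. u \<in> V \<Longrightarrow> inner (w - orth_proj V w) u = 0"
proof -
  have sub: "subspace V" using assms by (simp add: closed_subspace_def)
  obtain v where v: "v \<in> V" "\<forall>u\<in>V. inner (w - v) u = 0" using proj_exists[OF assms] by blast
  have "orth_proj V w = v" unfolding orth_proj_def
    by (rule the_equality) (use v proj_unique[OF sub] in blast)+
  then show "orth_proj V w \<in> V" "\<And>u. u \<in> V \<Longrightarrow> inner (w - orth_proj V w) u = 0" using v by auto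
qed

lemma orth_proj_eq:
  fixes V :: "'a::{real_inner,complete_space} set"
  assumes "closed_subspace V" "v \<in> V" "\<And>u. u \<in> V \<Longrightarrow> inner (w - v) u = 0"
  shows "orth_proj V w = v"
  using proj_unique[of V "orth_proj V w" w v] orth_proj[OF assms(1)] assms
  by (auto simp: closed_subspace_def)

context
  fixes V :: "'a::{real_inner,complete_space} set"
  assumes cs: "closed_subspace V"
begin

lemma sub: "subspace V" using cs by (simp add: closed_subspace_def)

lemma proj_in: "orth_proj V w \<in> V" using orth_proj(1)[OF cs] .

lemma proj_orth: "u \<in> V \<Longrightarrow> inner (w - orth_proj V w) u = 0" using orth_proj(2)[OF cs] .

lemma proj_orth': "u \<in> V \<Longrightarrow> inner u (w - orth_proj V w) = 0" using proj_orth by (simp add: inner_commute)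

lemma proj_id: "v \<in> V \<Longrightarrow> orth_proj V v = v"
  by (rule orth_proj_eq[OF cs]) auto

lemma proj_add: "orth_proj V (x + y) = orth_proj V x + orth_proj V y"
proof (rule orth_proj_eq[OF cs])
  show "orth_proj V x + orth_proj V y \<in> V" using sub proj_in by (simp add: subspace_add)
  fix u assume u: "u \<in> V"
  have eq: "x + y - (orth_proj V x + orth_proj V y) = (x - orth_proj V x) + (y - orth_proj V y)" by simp
  show "inner (x + y - (orth_proj V x + orth_proj V y)) u = 0"
    unfolding eq inner_add_left using proj_orth[OF u, of x] proj_orth[OF u, of y] by simp
qed

lemma proj_diff: "orth_proj V (x - y) = orth_proj V x - orth_proj V y"
proof (rule orth_proj_eq[OF cs])
  show "orth_proj V x - orth_proj V y \<in> V" using sub proj_in by (simp add: subspace_diff)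
  fix u assume u: "u \<in> V"
  have "x - y - (orth_proj V x - orth_proj V y) = (x - orth_proj V x) - (y - orth_proj V y)" by simp
  then show "inner (x - y - (orth_proj V x - orth_proj V y)) u = 0"
    using proj_orth[OF u, of x] proj_orth[OF u, of y] by (simp add: inner_diff_left)
qed

lemma proj_selfadj: "inner (orth_proj V x) y = inner x (orth_proj V y)"
proof -
  have "inner (orth_proj V x) y = inner (orth_proj V x) (orth_proj V y) + inner (orth_proj V x) (y - orth_proj V y)"
    by (simp add: inner_diff_right)
  also have "\<dots> = inner (orth_proj V x) (orth_proj V y)" using proj_orth'[OF proj_in] by simp
  also have "\<dots> = inner (orth_proj V x) (orth_proj V y) + inner (x - orth_proj V x) (orth_proj V y)"
    using proj_orth[OF proj_in] by simp
  also have "\<dots> = inner x (orth_proj V y)" by (simp add: inner_diff_left)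
  finally show ?thesis .
qed

lemma proj_sq: "inner (orth_proj V x) x = (norm (orth_proj V x))\<^sup>2"
proof -
  have "inner (orth_proj V x) x = inner (orth_proj V x) (orth_proj V x) + inner (orth_proj V x) (x - orth_proj V x)"
    by (simp add: inner_diff_right)
  then show ?thesis using proj_orth'[OF proj_in] by (simp add: power2_norm_eq_inner)
qed

lemma proj_pyth: "(norm w)\<^sup>2 = (norm (orth_proj V w))\<^sup>2 + (norm (w - orth_proj V w))\<^sup>2"
proof -
  have "w = orth_proj V w + (w - orth_proj V w)" by simp
  then have "(norm w)\<^sup>2 = (norm (orth_proj V w + (w - orth_proj V w)))\<^sup>2" by simp
  also have "\<dots> = (norm (orth_proj V w))\<^sup>2 + (norm (w - orth_proj V w))\<^sup>2"
    by (simp only: nsq_add proj_orth'[OF proj_in])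
  finally show ?thesis .
qed

lemma proj_norm_le: "norm (orth_proj V w) \<le> norm w"
proof (rule power2_le_imp_le)
  show "(norm (orth_proj V w))\<^sup>2 \<le> (norm w)\<^sup>2" using proj_pyth[of w] by simp
qed simp

lemma proj_zero: "(\<And>u. u \<in> V \<Longrightarrow> inner w u = 0) \<Longrightarrow> orth_proj V w = 0"
  by (rule orth_proj_eq[OF cs]) (auto simp: sub subspace_0)

lemma infdist_proj: "infdist w V = norm (w - orth_proj V w)"
proof (rule antisym)
  show "infdist w V \<le> norm (w - orth_proj V w)"
    using infdist_le[OF proj_in, of w] by (simp add: dist_norm)
  have ne: "V \<noteq> {}" using sub subspace_0 by blast
  show "norm (w - orth_proj V w) \<le> infdist w V"
    unfolding infdist_notempty[OF ne]
  proof (rule cINF_greatest[OF ne])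
    fix a assume a: "a \<in> V"
    have "orth_proj V w - a \<in> V" using sub a proj_in by (simp add: subspace_diff)
    then have "inner (w - orth_proj V w) (orth_proj V w - a) = 0" by (rule proj_orth)
    moreover have "w - a = (w - orth_proj V w) + (orth_proj V w - a)" by simp
    ultimately have "(norm (w - a))\<^sup>2 = (norm (w - orth_proj V w))\<^sup>2 + (norm (orth_proj V w - a))\<^sup>2"
      by (simp only: nsq_add)
    then have "(norm (w - orth_proj V w))\<^sup>2 \<le> (norm (w - a))\<^sup>2" by simp
    then show "norm (w - orth_proj V w) \<le> dist w a" unfolding dist_norm by (rule power2_le_imp_le) simp
  qed
qed

end

lemma proj_nested:
  fixes V W :: "'a::{real_inner,complete_space} set"
  assumes csV: "closed_subspace V" and csW: "closed_subspace W" and VW: "V \<subseteq> W"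
  shows "orth_proj V (orth_proj W w) = orth_proj V w"
proof -
  have "orth_proj V w = orth_proj V (orth_proj W w)"
  proof (rule orth_proj_eq[OF csV])
    show "orth_proj V (orth_proj W w) \<in> V" by (rule proj_in[OF csV])
    fix u assume u: "u \<in> V"
    have eq: "w - orth_proj V (orth_proj W w) = (w - orth_proj W w) + (orth_proj W w - orth_proj V (orth_proj W w))" by simp
    have uW: "u \<in> W" using u VW by blast
      show "inner (w - orth_proj V (orth_proj W w)) u = 0"
      unfolding eq inner_add_left
      using proj_orth[OF csW uW, of w] proj_orth[OF csV u, of "orth_proj W w"] by simp
  qed
  then show ?thesis by simp
qed

lemma subspace_closure':
  fixes S :: "'a::real_normed_vector set"
  assumes "subspace S"
  shows "subspace (closure S)"
  unfolding subspace_def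
proof (intro conjI ballI allI)
  show "0 \<in> closure S" using assms subspace_0 closure_subset by blast
next
  fix x y assume x: "x \<in> closure S" and y: "y \<in> closure S"
  show "x + y \<in> closure S" unfolding closure_approachable
  proof (intro allI impI)
    fix \<epsilon> :: real assume "\<epsilon> > 0"
    then have h: "\<epsilon>/2 > 0" by simp
    obtain a where a: "a \<in> S" "dist a x < \<epsilon>/2" using x h unfolding closure_approachable by blast
    obtain b where b: "b \<in> S" "dist b y < \<epsilon>/2" using y h unfolding closure_approachable by blast
    have "dist (a + b) (x + y) \<le> dist a x + dist b y"
      by (rule dist_triangle_add)
    then show "\<exists>c\<in>S. dist c (x + y) < \<epsilon>" using a b assms subspace_add
      by (intro bexI[of _ "a + b"]) auto
  qed
next
  fix c :: real and x assume x: "x \<in> closure S"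
  show "c *\<^sub>R x \<in> closure S"
  proof (cases "c = 0")
    case True then show ?thesis using assms subspace_0 closure_subset by (metis scale_zero_left subsetD)
  next
    case False
    show ?thesis unfolding closure_approachable
    proof (intro allI impI)
      fix \<epsilon> :: real assume ep: "\<epsilon> > 0"
      then have h: "\<epsilon>/\<bar>c\<bar> > 0" using False by simp
      obtain a where a: "a \<in> S" "dist a x < \<epsilon>/\<bar>c\<bar>" using x h unfolding closure_approachable by blast
      have "dist (c *\<^sub>R a) (c *\<^sub>R x) = \<bar>c\<bar> * dist a x"
        by (simp add: dist_norm flip: scaleR_diff_right)
      also have "\<dots> < \<epsilon>" using a(2) False by (simp add: divide_simps mult.commute)
      finally show "\<exists>b\<in>S. dist b (c *\<^sub>R x) < \<epsilon>" using a assms subspace_mul by blast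
    qed
  qed
qed

context
  fixes V :: "'a::{real_inner,complete_space} set"
  assumes cs: "closed_subspace V"
begin

lemma proj_scale: "orth_proj V (c *\<^sub>R x) = c *\<^sub>R orth_proj V x"
proof (rule orth_proj_eq[OF cs])
  show "c *\<^sub>R orth_proj V x \<in> V" using sub[OF cs] proj_in[OF cs] by (simp add: subspace_mul)
  fix u assume u: "u \<in> V"
  have eq: "c *\<^sub>R x - c *\<^sub>R orth_proj V x = c *\<^sub>R (x - orth_proj V x)" by (simp add: scaleR_diff_right)
  show "inner (c *\<^sub>R x - c *\<^sub>R orth_proj V x) u = 0"
    unfolding eq using proj_orth[OF cs u, of x] by simp
qed

lemma proj_0: "orth_proj V 0 = 0"
  using proj_id[OF cs] sub[OF cs] subspace_0 by blast

lemma proj_res_le: "norm (w - orth_proj V w) \<le> norm w"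
proof (rule power2_le_imp_le)
  show "(norm (w - orth_proj V w))\<^sup>2 \<le> (norm w)\<^sup>2" using proj_pyth[OF cs, of w] by simp
qed simp

end

lemma le_from_sq:
  fixes t c :: real
  assumes "t\<^sup>2 \<le> c * t" "0 \<le> t" "0 \<le> c"
  shows "t \<le> c"
proof (cases "t = 0")
  case True then show ?thesis using assms by simp
next
  case False
  then have "t * t \<le> c * t" "0 < t" using assms by (auto simp: power2_eq_square)
  then show ?thesis by (rule mult_right_le_imp_le)
qed

lemma nl_ineq:
  fixes b2 c2 h2 e :: real
  assumes "0 \<le> e" "c2 \<le> e\<^sup>2 * b2" "c2\<^sup>2 \<le> b2 * h2" "0 \<le> c2" "c2 \<le> b2" "0 \<le> h2"
  shows "c2 - h2 \<le> e\<^sup>2 * (b2 - c2)"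
proof (cases "b2 = 0")
  case True
  then have "c2 = 0" using assms by simp
  then show ?thesis using True assms by simp
next
  case False
  then have b: "b2 > 0" using assms by simp
  have "b2 * (c2 - h2) \<le> b2*c2 - c2\<^sup>2" using assms(3) by (simp add: algebra_simps)
  also have "\<dots> = c2*(b2 - c2)" by (simp add: power2_eq_square algebra_simps)
  also have "\<dots> \<le> (e\<^sup>2*b2)*(b2-c2)" by (rule mult_right_mono) (use assms in auto)
  also have "\<dots> = b2 * (e\<^sup>2 * (b2 - c2))" by simp
  finally show ?thesis using b by (simp add: mult_le_cancel_left_pos)
qed

lemma mcauchy:
  fixes A B X Y e :: real
  assumes "\<bar>e\<bar> < 1"
  shows "(A*X + B*Y)\<^sup>2 \<le> (A\<^sup>2 + 2*e*A*B + B\<^sup>2) / (1 - e\<^sup>2) * (X\<^sup>2 + Y\<^sup>2 - 2*e*X*Y)"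
proof -
  have d: "1 - e\<^sup>2 > 0" using assms abs_square_less_1 by force
  have "(A\<^sup>2 + 2*e*A*B + B\<^sup>2) * (X\<^sup>2 + Y\<^sup>2 - 2*e*X*Y) - (1 - e\<^sup>2) * (A*X + B*Y)\<^sup>2
        = (A*Y - B*X - e*(A*X - B*Y))\<^sup>2"
    by (simp add: power2_eq_square algebra_simps)
  then have "(1 - e\<^sup>2) * (A*X + B*Y)\<^sup>2 \<le> (A\<^sup>2 + 2*e*A*B + B\<^sup>2) * (X\<^sup>2 + Y\<^sup>2 - 2*e*X*Y)"
    by (metis diff_ge_0_iff_ge zero_le_power2)
  then show ?thesis using d by (simp add: divide_simps mult.commute)
qed

lemma mono_f:
  fixes e d1 d2 t1 t2 R :: real
  assumes "0 \<le> e" "e < 1" "0 \<le> t1" "t1 \<le> d1" "0 \<le> t2" "t2 \<le> d2"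
    "d1\<^sup>2 = t1\<^sup>2 + R" "d2\<^sup>2 = t2\<^sup>2 + R" "0 \<le> R"
  shows "(t1\<^sup>2 + 2*e*t1*t2 + t2\<^sup>2) / (1 - e\<^sup>2) + R \<le> (d1\<^sup>2 + 2*e*d1*d2 + d2\<^sup>2) / (1 - e\<^sup>2)"
proof -
  have d: "1 - e\<^sup>2 > 0" using assms(1,2) abs_square_less_1[of e] by simp
  have "t1 * t2 \<le> d1 * d2" using assms by (intro mult_mono) auto
  then have m: "e * (t1 * t2) \<le> e * (d1 * d2)" using assms(1) by (rule mult_left_mono)
  have r: "(1 - e\<^sup>2) * R \<le> 2 * R" using assms(9) d by (simp add: algebra_simps)
  have main: "t1\<^sup>2 + 2*e*t1*t2 + t2\<^sup>2 + (1 - e\<^sup>2) * R \<le> d1\<^sup>2 + 2*e*d1*d2 + d2\<^sup>2"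
    using m r assms(7,8) by (simp add: algebra_simps)
  have "(t1\<^sup>2 + 2*e*t1*t2 + t2\<^sup>2) / (1 - e\<^sup>2) + R = (t1\<^sup>2 + 2*e*t1*t2 + t2\<^sup>2 + (1 - e\<^sup>2) * R) / (1 - e\<^sup>2)"
    using d by (simp add: field_simps)
  also have "\<dots> \<le> (d1\<^sup>2 + 2*e*d1*d2 + d2\<^sup>2) / (1 - e\<^sup>2)"
    using main d by (intro divide_right_mono) auto
  finally show ?thesis .
qed

lemma cs_core:
  fixes z :: "'a::real_inner" and A B e :: real
  assumes e: "0 \<le> e" "e < 1" and AB: "0 \<le> A" "0 \<le> B"
    and approx: "\<And>\<eta>. \<eta> > 0 \<Longrightarrow> \<exists>\<alpha> \<beta>. norm (z - (\<alpha> + \<beta>)) < \<eta> \<and> inner z \<alpha> \<le> A * norm \<alpha> \<and>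
        inner z \<beta> \<le> B * norm \<beta> \<and>
        (norm \<alpha>)\<^sup>2 + (norm \<beta>)\<^sup>2 - 2*e*norm \<alpha>*norm \<beta> \<le> (norm (\<alpha> + \<beta>))\<^sup>2"
  shows "(norm z)\<^sup>2 \<le> (A\<^sup>2 + 2*e*A*B + B\<^sup>2) / (1 - e\<^sup>2)"
proof -
  define F where "F = (A\<^sup>2 + 2*e*A*B + B\<^sup>2) / (1 - e\<^sup>2)"
  have d: "1 - e\<^sup>2 > 0" using e abs_square_less_1[of e] by simp
  have F0: "F \<ge> 0" unfolding F_def using d e AB by simp
  define r where "r = sqrt F"
  have r0: "r \<ge> 0" unfolding r_def using F0 by simp
  define N where "N = norm z"
  have N0: "N \<ge> 0" unfolding N_def by simp
  have key: "N\<^sup>2 \<le> r * N + \<eta> * (N + r)" if \<eta>: "\<eta> > 0" for \<eta>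
  proof -
    obtain \<alpha> \<beta> where ab: "norm (z - (\<alpha> + \<beta>)) < \<eta>" "inner z \<alpha> \<le> A * norm \<alpha>"
        "inner z \<beta> \<le> B * norm \<beta>"
        "(norm \<alpha>)\<^sup>2 + (norm \<beta>)\<^sup>2 - 2*e*norm \<alpha>*norm \<beta> \<le> (norm (\<alpha> + \<beta>))\<^sup>2"
      using approx[OF \<eta>] by blast
    define g where "g = \<alpha> + \<beta>"
    have "(A * norm \<alpha> + B * norm \<beta>)\<^sup>2 \<le> F * ((norm \<alpha>)\<^sup>2 + (norm \<beta>)\<^sup>2 - 2*e*norm \<alpha>*norm \<beta>)"
      unfolding F_def using mcauchy[of e] e by simp
    also have "\<dots> \<le> F * (norm g)\<^sup>2" unfolding g_def using ab(4) F0 by (intro mult_left_mono) auto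
    finally have "(A * norm \<alpha> + B * norm \<beta>)\<^sup>2 \<le> (r * norm g)\<^sup>2"
      unfolding r_def using F0 by (simp add: power_mult_distrib)
    then have "\<bar>A * norm \<alpha> + B * norm \<beta>\<bar> \<le> r * norm g"
      using abs_le_square_iff[of "A * norm \<alpha> + B * norm \<beta>" "r * norm g"] r0 by simp
    then have ig: "inner z g \<le> r * norm g"
      using ab(2,3) unfolding g_def by (simp add: inner_add_right)
    have "inner z (z - g) \<le> N * norm (z - g)" unfolding N_def by (rule norm_cauchy_schwarz)
    also have "\<dots> \<le> N * \<eta>" using ab(1) N0 unfolding g_def by (intro mult_left_mono) auto
    finally have "N\<^sup>2 - inner z g \<le> N * \<eta>"
      unfolding N_def by (simp add: inner_diff_right power2_norm_eq_inner)
    moreover have "norm g \<le> N + \<eta>"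
    proof -
      have "norm g \<le> norm z + norm (g - z)" by (metis add.commute diff_add_cancel norm_triangle_ineq)
      also have "norm (g - z) = norm (z - g)" by (rule norm_minus_commute)
      finally show ?thesis using ab(1) unfolding N_def g_def by simp
    qed
    then have "r * norm g \<le> r * (N + \<eta>)" using r0 by (rule mult_left_mono)
    ultimately show ?thesis using ig by (simp add: algebra_simps)
  qed
  have "N\<^sup>2 \<le> r * N"
  proof (rule field_le_epsilon)
    fix \<epsilon> :: real assume ep: "\<epsilon> > 0"
    define \<eta> where "\<eta> = \<epsilon> / (N + r + 1)"
    have \<eta>0: "\<eta> > 0" unfolding \<eta>_def using ep N0 r0 by simp
    have "\<eta> * (N + r) \<le> \<eta> * (N + r + 1)" using \<eta>0 by simp
    also have "\<dots> = \<epsilon>" unfolding \<eta>_def using N0 r0 by simp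
    finally show "N\<^sup>2 \<le> r * N + \<epsilon>" using key[OF \<eta>0] by simp
  qed
  then have "N \<le> r" using N0 r0 by (rule le_from_sq)
  then have "N\<^sup>2 \<le> r\<^sup>2" using N0 by (simp add: power_mono)
  then show ?thesis unfolding N_def r_def F_def[symmetric] using F0 by simp
qed

locale twosub =
  fixes V1 V2 :: "'a::{real_inner,complete_space} set"
  assumes cs1: "closed_subspace V1" and cs2: "closed_subspace V2"
    and n12: "\<not> V1 \<subseteq> V2" and n21: "\<not> V2 \<subseteq> V1"
    and elt: "cos_angle V1 V2 < 1"
begin

abbreviation "V0 \<equiv> V1 \<inter> V2"
abbreviation "e \<equiv> cos_angle V1 V2"
abbreviation "SS \<equiv> {x + y | x y. x \<in> V1 \<and> y \<in> V2}"
abbreviation "S12 \<equiv> closure SS"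
abbreviation "P0 \<equiv> orth_proj V0"
abbreviation "P1 \<equiv> orth_proj V1"
abbreviation "P2 \<equiv> orth_proj V2"
abbreviation "P12 \<equiv> orth_proj S12"

definition orth0 :: "'a \<Rightarrow> bool" where "orth0 x \<longleftrightarrow> (\<forall>u\<in>V0. inner x u = 0)"

lemma sub1: "subspace V1" and sub2: "subspace V2"
  using cs1 cs2 by (auto simp: closed_subspace_def)

lemma cs0: "closed_subspace V0"
  using cs1 cs2 by (auto simp: closed_subspace_def subspace_inter closed_Int)

lemma subSS: "subspace SS"
  unfolding subspace_def
proof (intro conjI ballI allI)
  have "(0::'a) + 0 \<in> SS" using subspace_0[OF sub1] subspace_0[OF sub2] by blast
  then show "0 \<in> SS" by simp
next
  fix a b assume "a \<in> SS" "b \<in> SS"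
  then obtain x y x' y' where "a = x + y" "x \<in> V1" "y \<in> V2" "b = x' + y'" "x' \<in> V1" "y' \<in> V2" by blast
  moreover have "x + y + (x' + y') = (x + x') + (y + y')" by simp
  moreover have "x + x' \<in> V1" "y + y' \<in> V2" using calculation sub1 sub2 subspace_add by auto
  ultimately show "a + b \<in> SS" by blast
next
  fix c :: real and a assume "a \<in> SS"
  then obtain x y where "a = x + y" "x \<in> V1" "y \<in> V2" by blast
  moreover have "c *\<^sub>R (x + y) = c *\<^sub>R x + c *\<^sub>R y" by (simp add: scaleR_add_right)
  moreover have "c *\<^sub>R x \<in> V1" "c *\<^sub>R y \<in> V2" using calculation sub1 sub2 subspace_mul by auto
  ultimately show "c *\<^sub>R a \<in> SS" by blast
qed

lemma cs12: "closed_subspace S12"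
  unfolding closed_subspace_def using subspace_closure'[OF subSS] by simp

lemma V1_S12: "V1 \<subseteq> S12"
proof
  fix x assume "x \<in> V1"
  then have "x + 0 \<in> SS" using sub2 subspace_0 by blast
  then show "x \<in> S12" using closure_subset by fastforce
qed

lemma V2_S12: "V2 \<subseteq> S12"
proof
  fix y assume "y \<in> V2"
  then have "0 + y \<in> SS" using sub1 subspace_0 by blast
  then show "y \<in> S12" using closure_subset by fastforce
qed

lemma sup_ge:
  assumes x: "x \<in> V1" "orth0 x" "x \<noteq> 0" and y: "y \<in> V2" "orth0 y" "y \<noteq> 0"
  shows "\<bar>inner x y\<bar> / (norm x * norm y) \<le> e"
proof -
  define x' where "x' = inverse (norm x) *\<^sub>R x"
  define y' where "y' = inverse (norm y) *\<^sub>R y"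
  have x': "x' \<in> V1" "norm x' = 1" "\<forall>u\<in>V0. inner x' u = 0"
    using x sub1 subspace_mul unfolding x'_def orth0_def by auto
  have y': "y' \<in> V2" "norm y' = 1" "\<forall>u\<in>V0. inner y' u = 0"
    using y sub2 subspace_mul unfolding y'_def orth0_def by auto
  define A where "A = {\<bar>inner v1 v2\<bar> | v1 v2.
      v1 \<in> V1 \<and> v2 \<in> V2 \<and> norm v1 = 1 \<and> norm v2 = 1 \<and>
      (\<forall>u\<in>V1 \<inter> V2. inner v1 u = 0) \<and> (\<forall>u\<in>V1 \<inter> V2. inner v2 u = 0)}"
  have eA: "e = Sup A" unfolding A_def cos_angle_def ..
  have mem: "\<bar>inner x' y'\<bar> \<in> A" unfolding A_def using x' y' by blast
  have bdd: "bdd_above A"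
  proof (rule bdd_aboveI)
    fix a assume "a \<in> A"
    then have "\<exists>v1 v2::'a. a = \<bar>inner v1 v2\<bar> \<and> norm v1 = 1 \<and> norm v2 = 1" unfolding A_def by force
    then obtain v1 v2 :: 'a where "a = \<bar>inner v1 v2\<bar>" "norm v1 = 1" "norm v2 = 1" by blast
    then show "a \<le> 1" using Cauchy_Schwarz_ineq2[of v1 v2] by simp
  qed
  have "\<bar>inner x' y'\<bar> \<le> e" unfolding eA using mem bdd by (rule cSup_upper)
  moreover have "\<bar>inner x' y'\<bar> = \<bar>inner x y\<bar> / (norm x * norm y)"
    unfolding x'_def y'_def using x(3) y(3) by (simp add: abs_mult divide_simps)
  ultimately show ?thesis by simp
qed

lemma ex_nonzero:
  shows "\<exists>x. x \<in> V1 \<and> orth0 x \<and> x \<noteq> 0" and "\<exists>y. y \<in> V2 \<and> orth0 y \<and> y \<noteq> 0"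
proof -
  obtain v where v: "v \<in> V1" "v \<notin> V2" using n12 by blast
  define x where "x = v - P0 v"
  have "P0 v \<in> V0" by (rule proj_in[OF cs0])
  then have "x \<in> V1" unfolding x_def using v sub1 subspace_diff by blast
  moreover have "orth0 x" unfolding orth0_def x_def using proj_orth[OF cs0] by blast
  moreover have "x \<noteq> 0" using v \<open>P0 v \<in> V0\<close> unfolding x_def by auto
  ultimately show "\<exists>x. x \<in> V1 \<and> orth0 x \<and> x \<noteq> 0" by blast
next
  obtain v where v: "v \<in> V2" "v \<notin> V1" using n21 by blast
  define x where "x = v - P0 v"
  have "P0 v \<in> V0" by (rule proj_in[OF cs0])
  then have "x \<in> V2" unfolding x_def using v sub2 subspace_diff by blast
  moreover have "orth0 x" unfolding orth0_def x_def using proj_orth[OF cs0] by blast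
  moreover have "x \<noteq> 0" using v \<open>P0 v \<in> V0\<close> unfolding x_def by auto
  ultimately show "\<exists>y. y \<in> V2 \<and> orth0 y \<and> y \<noteq> 0" by blast
qed

lemma e_nonneg: "0 \<le> e"
proof -
  obtain x y where "x \<in> V1" "orth0 x" "x \<noteq> 0" "y \<in> V2" "orth0 y" "y \<noteq> 0" using ex_nonzero by blast
  then have "\<bar>inner x y\<bar> / (norm x * norm y) \<le> e" by (rule sup_ge)
  moreover have "0 \<le> \<bar>inner x y\<bar> / (norm x * norm y)" by simp
  ultimately show ?thesis by linarith
qed

lemma e_abs: "\<bar>e\<bar> < 1" using e_nonneg elt by simp

lemma angle:
  assumes "x \<in> V1" "orth0 x" "y \<in> V2" "orth0 y"
  shows "\<bar>inner x y\<bar> \<le> e * norm x * norm y"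
proof (cases "x = 0 \<or> y = 0")
  case True then show ?thesis by auto
next
  case False
  then have "\<bar>inner x y\<bar> / (norm x * norm y) \<le> e" using sup_ge assms by blast
  then show ?thesis using False by (simp add: divide_simps mult.assoc)
qed

lemma orth0_P1: "orth0 x \<Longrightarrow> orth0 (P1 x)"
  unfolding orth0_def
proof
  fix u assume x: "\<forall>u\<in>V0. inner x u = 0" and u: "u \<in> V0"
  have "inner (P1 x) u = inner x (P1 u)" by (rule proj_selfadj[OF cs1])
  also have "P1 u = u" using u by (intro proj_id[OF cs1]) simp
  finally show "inner (P1 x) u = 0" using x u by simp
qed

lemma orth0_P2: "orth0 x \<Longrightarrow> orth0 (P2 x)"
  unfolding orth0_def
proof
  fix u assume x: "\<forall>u\<in>V0. inner x u = 0" and u: "u \<in> V0"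
  have "inner (P2 x) u = inner x (P2 u)" by (rule proj_selfadj[OF cs2])
  also have "P2 u = u" using u by (intro proj_id[OF cs2]) simp
  finally show "inner (P2 x) u = 0" using x u by simp
qed

lemma projang1:
  assumes "x \<in> V2" "orth0 x"
  shows "norm (P1 x) \<le> e * norm x"
proof -
  have t: "P1 x \<in> V1" "orth0 (P1 x)" using proj_in[OF cs1] orth0_P1[OF assms(2)] by auto
  have "(norm (P1 x))\<^sup>2 = inner (P1 x) x" using proj_sq[OF cs1] by simp
  also have "\<dots> \<le> \<bar>inner (P1 x) x\<bar>" by simp
  also have "\<dots> \<le> e * norm (P1 x) * norm x" using angle[OF t assms] .
  finally have "(norm (P1 x))\<^sup>2 \<le> (e * norm x) * norm (P1 x)" by (simp add: mult_ac)
  then show ?thesis by (rule le_from_sq) (use e_nonneg in auto)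
qed

lemma projang2:
  assumes "x \<in> V1" "orth0 x"
  shows "norm (P2 x) \<le> e * norm x"
proof -
  have t: "P2 x \<in> V2" "orth0 (P2 x)" using proj_in[OF cs2] orth0_P2[OF assms(2)] by auto
  have "(norm (P2 x))\<^sup>2 = inner (P2 x) x" using proj_sq[OF cs2] by simp
  also have "\<dots> = inner x (P2 x)" by (simp add: inner_commute)
  also have "\<dots> \<le> \<bar>inner x (P2 x)\<bar>" by simp
  also have "\<dots> \<le> e * norm x * norm (P2 x)" using angle[OF assms t] .
  finally have "(norm (P2 x))\<^sup>2 \<le> (e * norm x) * norm (P2 x)" by (simp add: mult_ac)
  then show ?thesis by (rule le_from_sq) (use e_nonneg in auto)
qed

lemma comp:
  assumes a: "a \<in> V1" "orth0 a" and b: "b \<in> V2" "orth0 b"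
  shows "\<bar>inner (a - P2 a) (b - P1 b)\<bar> \<le> e * norm (a - P2 a) * norm (b - P1 b)"
proof -
  define c where "c = P1 b"
  define h where "h = P2 c"
  have s1: "inner (b - P1 b) (a - P2 a) = - inner c (a - P2 a)"
    using proj_orth'[OF cs2 b(1), of a] unfolding c_def by (simp add: inner_diff_left)
  have s2: "inner c (a - P2 a) = inner (c - h) (a - P2 a)"
    using proj_orth'[OF cs2 proj_in[OF cs2], of c a] unfolding h_def by (simp add: inner_diff_left)
  have "\<bar>inner (a - P2 a) (b - P1 b)\<bar> = \<bar>inner (c - h) (a - P2 a)\<bar>"
    using s1 s2 by (simp add: inner_commute)
  also have "\<dots> \<le> norm (c - h) * norm (a - P2 a)" by (rule Cauchy_Schwarz_ineq2)
  also have "norm (c - h) \<le> e * norm (b - P1 b)"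
  proof (rule power2_le_imp_le)
    have ch: "(norm (c - h))\<^sup>2 = (norm c)\<^sup>2 - (norm h)\<^sup>2"
      using proj_pyth[OF cs2, of c] unfolding h_def by simp
    have g: "(norm (b - P1 b))\<^sup>2 = (norm b)\<^sup>2 - (norm c)\<^sup>2"
      using proj_pyth[OF cs1, of b] unfolding c_def by simp
    have C: "norm c \<le> e * norm b" unfolding c_def using projang1[OF b] .
    have C2: "(norm c)\<^sup>2 \<le> e\<^sup>2 * (norm b)\<^sup>2"
      using power_mono[OF C norm_ge_zero, of 2] by (simp add: power_mult_distrib)
    have ibh: "inner b h = (norm c)\<^sup>2"
    proof -
      have "inner b h = inner (P2 b) c" unfolding h_def using proj_selfadj[OF cs2, of b c] by simp
      also have "\<dots> = inner b c" using proj_id[OF cs2 b(1)] by simp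
      also have "\<dots> = inner c b" by (simp add: inner_commute)
      also have "\<dots> = (norm c)\<^sup>2" unfolding c_def by (rule proj_sq[OF cs1])
      finally show ?thesis .
    qed
    have "(norm c)\<^sup>2 \<le> norm b * norm h" using norm_cauchy_schwarz[of b h] ibh by simp
    then have CH: "((norm c)\<^sup>2)\<^sup>2 \<le> (norm b)\<^sup>2 * (norm h)\<^sup>2"
      using power_mono[of "(norm c)\<^sup>2" "norm b * norm h" 2] by (simp add: power_mult_distrib)
    have cb: "(norm c)\<^sup>2 \<le> (norm b)\<^sup>2" using g zero_le_power2[of "norm (b - P1 b)"] by linarith
    have "(norm c)\<^sup>2 - (norm h)\<^sup>2 \<le> e\<^sup>2 * ((norm b)\<^sup>2 - (norm c)\<^sup>2)"
      by (rule nl_ineq[OF e_nonneg C2 CH]) (use cb in auto)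
    then show "(norm (c - h))\<^sup>2 \<le> (e * norm (b - P1 b))\<^sup>2"
      unfolding ch power_mult_distrib g .
    show "0 \<le> e * norm (b - P1 b)" using e_nonneg by simp
  qed
  then have "norm (c - h) * norm (a - P2 a) \<le> e * norm (b - P1 b) * norm (a - P2 a)"
    by (rule mult_right_mono) simp
  finally show ?thesis by (simp add: mult_ac)
qed


lemma V0_1: "V0 \<subseteq> V1" and V0_2: "V0 \<subseteq> V2" by auto

lemma orth0_closed: "closed {v. orth0 v}"
proof -
  have "{v. orth0 v} = (\<Inter>u\<in>V0. {v. inner u v = 0})"
    unfolding orth0_def by (auto simp: inner_commute)
  then show ?thesis by (simp add: closed_INT closed_hyperplane)
qed

lemma orth0_diff: "orth0 x \<Longrightarrow> orth0 y \<Longrightarrow> orth0 (x - y)"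
  unfolding orth0_def by (simp add: inner_diff_left)

lemma P0_orth0: "orth0 x \<Longrightarrow> P0 x = 0"
  unfolding orth0_def by (rule proj_zero[OF cs0]) auto

lemma dens_b:
  assumes z: "z \<in> S12" "orth0 z" and \<eta>: "\<eta> > 0"
  shows "\<exists>x y. x \<in> V1 \<and> y \<in> V2 \<and> orth0 x \<and> orth0 y \<and> norm (z - (x + y)) < \<eta>"
proof -
  obtain s where s: "s \<in> SS" "dist s z < \<eta>" using z(1) \<eta> unfolding closure_approachable by blast
  then obtain x y where xy: "s = x + y" "x \<in> V1" "y \<in> V2" by blast
  define x' where "x' = x - P0 x"
  define y' where "y' = y - P0 y"
  have "P0 x \<in> V0" "P0 y \<in> V0" using proj_in[OF cs0] by auto
  then have x': "x' \<in> V1" and y': "y' \<in> V2"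
    unfolding x'_def y'_def using xy sub1 sub2 subspace_diff by blast+
  have o: "orth0 x'" "orth0 y'" unfolding orth0_def x'_def y'_def using proj_orth[OF cs0] by blast+
  define d where "d = z - (x + y)"
  have "P0 d = P0 z - (P0 x + P0 y)" unfolding d_def by (simp add: proj_diff[OF cs0] proj_add[OF cs0])
  then have "P0 d = - (P0 x + P0 y)" using P0_orth0[OF z(2)] by simp
  then have "z - (x' + y') = d - P0 d" unfolding x'_def y'_def d_def by (simp add: algebra_simps)
  then have "norm (z - (x' + y')) \<le> norm d" using proj_res_le[OF cs0, of d] by simp
  also have "norm d < \<eta>" using s xy unfolding d_def by (simp add: dist_norm norm_minus_commute)
  finally show ?thesis using x' y' o by blast
qed

abbreviation "TT \<equiv> {(x - P2 x) + (y - P1 y) | x y. x \<in> V1 \<and> y \<in> V2}"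

lemma subTT: "subspace TT"
  unfolding subspace_def
proof (intro conjI ballI allI)
  have "(0 - P2 0) + (0 - P1 0) \<in> TT" using subspace_0[OF sub1] subspace_0[OF sub2] by blast
  then show "0 \<in> TT" using proj_0[OF cs1] proj_0[OF cs2] by simp
next
  fix a b assume "a \<in> TT" "b \<in> TT"
  then obtain x y x' y' where h: "a = (x - P2 x) + (y - P1 y)" "x \<in> V1" "y \<in> V2"
     "b = (x' - P2 x') + (y' - P1 y')" "x' \<in> V1" "y' \<in> V2" by blast
  have "a + b = ((x + x') - P2 (x + x')) + ((y + y') - P1 (y + y'))"
    unfolding h proj_add[OF cs1] proj_add[OF cs2] by (simp add: algebra_simps)
  moreover have "x + x' \<in> V1" "y + y' \<in> V2" using h sub1 sub2 subspace_add by auto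
  ultimately show "a + b \<in> TT" by blast
next
  fix c :: real and a assume "a \<in> TT"
  then obtain x y where h: "a = (x - P2 x) + (y - P1 y)" "x \<in> V1" "y \<in> V2" by blast
  have "c *\<^sub>R a = ((c *\<^sub>R x) - P2 (c *\<^sub>R x)) + ((c *\<^sub>R y) - P1 (c *\<^sub>R y))"
    unfolding h proj_scale[OF cs1] proj_scale[OF cs2] by (simp add: algebra_simps)
  moreover have "c *\<^sub>R x \<in> V1" "c *\<^sub>R y \<in> V2" using h sub1 sub2 subspace_mul by auto
  ultimately show "c *\<^sub>R a \<in> TT" by blast
qed

lemma TT_S12: "closure TT \<subseteq> S12"
proof (rule closure_mono, rule subsetI)
  fix t assume "t \<in> TT"
  then obtain x y where h: "t = (x - P2 x) + (y - P1 y)" "x \<in> V1" "y \<in> V2" by blast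
  have "t = (x - P1 y) + (y - P2 x)" unfolding h by simp
  moreover have "x - P1 y \<in> V1" using h sub1 proj_in[OF cs1] subspace_diff by blast
  moreover have "y - P2 x \<in> V2" using h sub2 proj_in[OF cs2] subspace_diff by blast
  ultimately show "t \<in> SS" by blast
qed

lemma TT_orth0: "closure TT \<subseteq> {v. orth0 v}"
proof (rule closure_minimal[OF _ orth0_closed], rule subsetI)
  fix t assume "t \<in> TT"
  then obtain x y where h: "t = (x - P2 x) + (y - P1 y)" "x \<in> V1" "y \<in> V2" by blast
  show "t \<in> {v. orth0 v}" unfolding orth0_def h
    using proj_orth[OF cs2, of _ x] proj_orth[OF cs1, of _ y] by (auto simp: inner_add_left)
qed

lemma dens_a:
  assumes z: "z \<in> S12" "orth0 z" and \<eta>: "\<eta> > 0"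
  shows "\<exists>x y. x \<in> V1 \<and> y \<in> V2 \<and> orth0 x \<and> orth0 y \<and> norm (z - ((x - P2 x) + (y - P1 y))) < \<eta>"
proof -
  define W where "W = closure TT"
  have csW: "closed_subspace W" unfolding W_def closed_subspace_def
    using subspace_closure'[OF subTT] by simp
  define w where "w = z - orth_proj W z"
  have PW: "orth_proj W z \<in> W" by (rule proj_in[OF csW])
  have wS: "w \<in> S12" unfolding w_def using z(1) PW TT_S12 subspace_diff cs12
    unfolding W_def closed_subspace_def by blast
  have wo: "orth0 w" unfolding w_def using z(2) PW TT_orth0 orth0_diff unfolding W_def by blast
  have wW: "inner w t = 0" if "t \<in> W" for t unfolding w_def using proj_orth[OF csW that] .
  have a1: "inner (w - P2 w) x = 0" if x: "x \<in> V1" for x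
  proof -
    have "(x - P2 x) + (0 - P1 0) \<in> TT" using x subspace_0[OF sub2] by blast
    then have "x - P2 x \<in> W" unfolding W_def using proj_0[OF cs1] closure_subset by fastforce
    then have "inner w (x - P2 x) = 0" by (rule wW)
    moreover have "inner (P2 w) x = inner w (P2 x)" by (rule proj_selfadj[OF cs2])
    ultimately show ?thesis by (simp add: inner_diff_left inner_diff_right)
  qed
  have a2: "inner (w - P1 w) y = 0" if y: "y \<in> V2" for y
  proof -
    have "(0 - P2 0) + (y - P1 y) \<in> TT" using y subspace_0[OF sub1] by blast
    then have "y - P1 y \<in> W" unfolding W_def using proj_0[OF cs2] closure_subset by fastforce
    then have "inner w (y - P1 y) = 0" by (rule wW)
    moreover have "inner (P1 w) y = inner w (P1 y)" by (rule proj_selfadj[OF cs1])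
    ultimately show ?thesis by (simp add: inner_diff_left inner_diff_right)
  qed
  have "P1 (w - P2 w) = 0" using a1 by (rule proj_zero[OF cs1])
  then have e1: "P1 w = P1 (P2 w)" by (simp add: proj_diff[OF cs1])
  have "P2 (w - P1 w) = 0" using a2 by (rule proj_zero[OF cs2])
  then have e2: "P2 w = P2 (P1 w)" by (simp add: proj_diff[OF cs2])
  have n1: "norm (P1 w) \<le> e * norm (P2 w)" unfolding e1
    using projang1[OF proj_in[OF cs2] orth0_P2[OF wo]] .
  have n2: "norm (P2 w) \<le> e * norm (P1 w)" unfolding e2
    using projang2[OF proj_in[OF cs1] orth0_P1[OF wo]] .
  have "norm (P1 w) \<le> e * (e * norm (P1 w))"
    using n1 mult_left_mono[OF n2 e_nonneg] by linarith
  then have "(1 - e * e) * norm (P1 w) \<le> 0" by (simp add: algebra_simps)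
  moreover have "1 - e * e > 0" using e_abs abs_square_less_1[of e] by (simp add: power2_eq_square)
  ultimately have "norm (P1 w) \<le> 0" by (simp add: mult_le_0_iff)
  then have p1: "P1 w = 0" by simp
  then have p2: "P2 w = 0" using e2 proj_0[OF cs2] by simp
  have o1: "inner w x = 0" if "x \<in> V1" for x
    using proj_selfadj[OF cs1, of w x] proj_id[OF cs1 that] p1 by simp
  have o2: "inner w y = 0" if "y \<in> V2" for y
    using proj_selfadj[OF cs2, of w y] proj_id[OF cs2 that] p2 by simp
  have "SS \<subseteq> {v. inner w v = 0}" using o1 o2 by (auto simp: inner_add_right)
  then have "S12 \<subseteq> {v. inner w v = 0}" by (rule closure_minimal) (rule closed_hyperplane)
  then have "inner w w = 0" using wS by blast
  then have "w = 0" by simp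
  then have "z \<in> W" using PW unfolding w_def by simp
  then obtain t where t: "t \<in> TT" "dist t z < \<eta>" using \<eta> unfolding W_def closure_approachable by blast
  then obtain x y where h: "t = (x - P2 x) + (y - P1 y)" "x \<in> V1" "y \<in> V2" by blast
  define x' where "x' = x - P0 x"
  define y' where "y' = y - P0 y"
  have P0: "P0 x \<in> V0" "P0 y \<in> V0" using proj_in[OF cs0] by auto
  then have x': "x' \<in> V1" and y': "y' \<in> V2"
    unfolding x'_def y'_def using h sub1 sub2 subspace_diff by blast+
  have o: "orth0 x'" "orth0 y'" unfolding orth0_def x'_def y'_def using proj_orth[OF cs0] by blast+
  have "x' - P2 x' = x - P2 x" unfolding x'_def proj_diff[OF cs2] using proj_id[OF cs2] P0 by simp
  moreover have "y' - P1 y' = y - P1 y" unfolding y'_def proj_diff[OF cs1] using proj_id[OF cs1] P0 by simp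
  ultimately have "norm (z - ((x' - P2 x') + (y' - P1 y'))) < \<eta>"
    using t h by (simp add: dist_norm norm_minus_commute)
  then show ?thesis using x' y' o by blast
qed

definition f :: "real \<Rightarrow> real \<Rightarrow> real" where
  "f a b = (a\<^sup>2 + 2*e*a*b + b\<^sup>2) / (1 - e\<^sup>2)"

lemma core_b:
  assumes z: "z \<in> S12" "orth0 z"
  shows "(norm z)\<^sup>2 \<le> f (norm (P1 z)) (norm (P2 z))"
  unfolding f_def
proof (rule cs_core[OF e_nonneg elt norm_ge_zero norm_ge_zero])
  fix \<eta> :: real assume \<eta>: "\<eta> > 0"
  obtain x y where xy: "x \<in> V1" "y \<in> V2" "orth0 x" "orth0 y" "norm (z - (x + y)) < \<eta>"
    using dens_b[OF z \<eta>] by blast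
  have ix: "inner z x \<le> norm (P1 z) * norm x"
  proof -
    have "inner z x = inner (P1 z) x" using proj_selfadj[OF cs1, of z x] proj_id[OF cs1 xy(1)] by simp
    also have "\<dots> \<le> norm (P1 z) * norm x" by (rule norm_cauchy_schwarz)
    finally show ?thesis .
  qed
  have iy: "inner z y \<le> norm (P2 z) * norm y"
  proof -
    have "inner z y = inner (P2 z) y" using proj_selfadj[OF cs2, of z y] proj_id[OF cs2 xy(2)] by simp
    also have "\<dots> \<le> norm (P2 z) * norm y" by (rule norm_cauchy_schwarz)
    finally show ?thesis .
  qed
  have "- (e * norm x * norm y) \<le> inner x y" using angle[OF xy(1,3,2,4)] by linarith
  then have "(norm x)\<^sup>2 + (norm y)\<^sup>2 - 2*e*norm x*norm y \<le> (norm (x + y))\<^sup>2"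
    unfolding nsq_add by linarith
  then show "\<exists>\<alpha> \<beta>. norm (z - (\<alpha> + \<beta>)) < \<eta> \<and> inner z \<alpha> \<le> norm (P1 z) * norm \<alpha> \<and>
        inner z \<beta> \<le> norm (P2 z) * norm \<beta> \<and>
        (norm \<alpha>)\<^sup>2 + (norm \<beta>)\<^sup>2 - 2*e*norm \<alpha>*norm \<beta> \<le> (norm (\<alpha> + \<beta>))\<^sup>2"
    using xy(5) ix iy by blast
qed

lemma core_a:
  assumes z: "z \<in> S12" "orth0 z"
  shows "(norm z)\<^sup>2 \<le> f (norm (z - P2 z)) (norm (z - P1 z))"
  unfolding f_def
proof (rule cs_core[OF e_nonneg elt norm_ge_zero norm_ge_zero])
  fix \<eta> :: real assume \<eta>: "\<eta> > 0"
  obtain x y where xy: "x \<in> V1" "y \<in> V2" "orth0 x" "orth0 y"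
      "norm (z - ((x - P2 x) + (y - P1 y))) < \<eta>"
    using dens_a[OF z \<eta>] by blast
  have ix: "inner z (x - P2 x) \<le> norm (z - P2 z) * norm (x - P2 x)"
  proof -
    have "inner (P2 z) (x - P2 x) = 0" by (rule proj_orth'[OF cs2 proj_in[OF cs2]])
    then have "inner z (x - P2 x) = inner (z - P2 z) (x - P2 x)" by (simp add: inner_diff_left)
    also have "\<dots> \<le> norm (z - P2 z) * norm (x - P2 x)" by (rule norm_cauchy_schwarz)
    finally show ?thesis .
  qed
  have iy: "inner z (y - P1 y) \<le> norm (z - P1 z) * norm (y - P1 y)"
  proof -
    have "inner (P1 z) (y - P1 y) = 0" by (rule proj_orth'[OF cs1 proj_in[OF cs1]])
    then have "inner z (y - P1 y) = inner (z - P1 z) (y - P1 y)" by (simp add: inner_diff_left)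
    also have "\<dots> \<le> norm (z - P1 z) * norm (y - P1 y)" by (rule norm_cauchy_schwarz)
    finally show ?thesis .
  qed
  have "- (e * norm (x - P2 x) * norm (y - P1 y)) \<le> inner (x - P2 x) (y - P1 y)"
    using comp[OF xy(1,3,2,4)] by linarith
  then have "(norm (x - P2 x))\<^sup>2 + (norm (y - P1 y))\<^sup>2 - 2*e*norm (x - P2 x)*norm (y - P1 y)
      \<le> (norm ((x - P2 x) + (y - P1 y)))\<^sup>2"
    unfolding nsq_add by linarith
  then show "\<exists>\<alpha> \<beta>. norm (z - (\<alpha> + \<beta>)) < \<eta> \<and> inner z \<alpha> \<le> norm (z - P2 z) * norm \<alpha> \<and>
        inner z \<beta> \<le> norm (z - P1 z) * norm \<beta> \<and>
        (norm \<alpha>)\<^sup>2 + (norm \<beta>)\<^sup>2 - 2*e*norm \<alpha>*norm \<beta> \<le> (norm (\<alpha> + \<beta>))\<^sup>2"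
    using xy(5) ix iy by blast
qed

lemma f_sym: "f a b = f b a"
  unfolding f_def by (simp add: algebra_simps)

lemma part_a: "(infdist w V0)\<^sup>2 \<le> f (infdist w V1) (infdist w V2)"
proof -
  define u where "u = w - P0 w"
  have P0V: "P0 w \<in> V0" by (rule proj_in[OF cs0])
  have ui: "u - P1 u = w - P1 w"
    unfolding u_def proj_diff[OF cs1] using proj_id[OF cs1, of "P0 w"] P0V by simp
  have ui2: "u - P2 u = w - P2 w"
    unfolding u_def proj_diff[OF cs2] using proj_id[OF cs2, of "P0 w"] P0V by simp
  have uo: "orth0 u" unfolding orth0_def u_def using proj_orth[OF cs0] by blast
  define z where "z = P12 u"
  define r where "r = u - z"
  have zS: "z \<in> S12" unfolding z_def by (rule proj_in[OF cs12])
  have zo: "orth0 z" unfolding orth0_def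
  proof
    fix v assume v: "v \<in> V0"
    then have "v \<in> S12" using V1_S12 by blast
    then have "P12 v = v" by (rule proj_id[OF cs12])
    then show "inner z v = 0" unfolding z_def using proj_selfadj[OF cs12, of u v] uo v
      unfolding orth0_def by simp
  qed
  have rS: "inner r s = 0" if "s \<in> S12" for s unfolding r_def z_def by (rule proj_orth[OF cs12 that])
  have un: "(norm u)\<^sup>2 = (norm z)\<^sup>2 + (norm r)\<^sup>2"
    using proj_pyth[OF cs12, of u] unfolding z_def r_def .
  have dist_i: "(norm (u - orth_proj V u))\<^sup>2 = (norm (z - orth_proj V z))\<^sup>2 + (norm r)\<^sup>2"
    if csV: "closed_subspace V" and VS: "V \<subseteq> S12" for V
  proof -
    have "orth_proj V r = 0" using rS VS by (intro proj_zero[OF csV]) auto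
    then have "orth_proj V u = orth_proj V z" unfolding r_def using proj_diff[OF csV, of u z] by simp
    then have eq: "u - orth_proj V u = (z - orth_proj V z) + r" unfolding r_def by simp
    have "z - orth_proj V z \<in> S12" using zS proj_in[OF csV] VS cs12 subspace_diff
      unfolding closed_subspace_def by blast
    then have "inner r (z - orth_proj V z) = 0" by (rule rS)
    then have i0: "inner (z - orth_proj V z) r = 0" by (simp add: inner_commute)
    show ?thesis unfolding eq nsq_add i0 by simp
  qed
  have d1: "(norm (w - P1 w))\<^sup>2 = (norm (z - P1 z))\<^sup>2 + (norm r)\<^sup>2"
    using dist_i[OF cs1 V1_S12] ui by simp
  have d2: "(norm (w - P2 w))\<^sup>2 = (norm (z - P2 z))\<^sup>2 + (norm r)\<^sup>2"
    using dist_i[OF cs2 V2_S12] ui2 by simp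
  have le1: "norm (z - P1 z) \<le> norm (w - P1 w)"
    by (rule power2_le_imp_le) (use d1 in auto)
  have le2: "norm (z - P2 z) \<le> norm (w - P2 w)"
    by (rule power2_le_imp_le) (use d2 in auto)
  have "(norm u)\<^sup>2 \<le> f (norm (z - P1 z)) (norm (z - P2 z)) + (norm r)\<^sup>2"
    using core_a[OF zS zo] f_sym un by simp
  also have "\<dots> \<le> f (norm (w - P1 w)) (norm (w - P2 w))"
    unfolding f_def by (rule mono_f[OF e_nonneg elt norm_ge_zero le1 norm_ge_zero le2 d1 d2]) simp
  finally show ?thesis
    unfolding infdist_proj[OF cs0] infdist_proj[OF cs1] infdist_proj[OF cs2] u_def .
qed

lemma part_b: "(norm (P12 w))\<^sup>2 \<le> f (norm (P1 w)) (norm (P2 w))"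
proof -
  define w12 where "w12 = P12 w"
  have p1: "P1 w12 = P1 w" unfolding w12_def by (rule proj_nested[OF cs1 cs12 V1_S12])
  have p2: "P2 w12 = P2 w" unfolding w12_def by (rule proj_nested[OF cs2 cs12 V2_S12])
  define m where "m = P0 w12"
  define z where "z = w12 - m"
  have mV: "m \<in> V0" unfolding m_def by (rule proj_in[OF cs0])
  have zo: "orth0 z" unfolding orth0_def z_def m_def using proj_orth[OF cs0] by blast
  have w12S: "w12 \<in> S12" unfolding w12_def by (rule proj_in[OF cs12])
  have zS: "z \<in> S12" unfolding z_def using w12S mV V1_S12 cs12 subspace_diff
    unfolding closed_subspace_def by blast
  have wn: "(norm w12)\<^sup>2 = (norm z)\<^sup>2 + (norm m)\<^sup>2"
    using proj_pyth[OF cs0, of w12] unfolding z_def m_def by simp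
  have pi: "(norm (orth_proj V w12))\<^sup>2 = (norm (orth_proj V z))\<^sup>2 + (norm m)\<^sup>2"
    if csV: "closed_subspace V" and VV: "V0 \<subseteq> V" for V
  proof -
    have "orth_proj V m = m" using mV VV by (intro proj_id[OF csV]) auto
    then have eq: "orth_proj V w12 = orth_proj V z + m"
      unfolding z_def proj_diff[OF csV] by simp
    have "inner (orth_proj V z) m = inner z (orth_proj V m)" by (rule proj_selfadj[OF csV])
    also have "\<dots> = 0" using \<open>orth_proj V m = m\<close> zo mV unfolding orth0_def by simp
    finally have i0: "inner (orth_proj V z) m = 0" .
    show ?thesis unfolding eq nsq_add i0 by simp
  qed
  have d1: "(norm (P1 w))\<^sup>2 = (norm (P1 z))\<^sup>2 + (norm m)\<^sup>2" using pi[OF cs1] p1 by auto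
  have d2: "(norm (P2 w))\<^sup>2 = (norm (P2 z))\<^sup>2 + (norm m)\<^sup>2" using pi[OF cs2] p2 by auto
  have le1: "norm (P1 z) \<le> norm (P1 w)" by (rule power2_le_imp_le) (use d1 in auto)
  have le2: "norm (P2 z) \<le> norm (P2 w)" by (rule power2_le_imp_le) (use d2 in auto)
  have "(norm w12)\<^sup>2 \<le> f (norm (P1 z)) (norm (P2 z)) + (norm m)\<^sup>2"
    using core_b[OF zS zo] wn by simp
  also have "\<dots> \<le> f (norm (P1 w)) (norm (P2 w))"
    unfolding f_def by (rule mono_f[OF e_nonneg elt norm_ge_zero le1 norm_ge_zero le2 d1 d2]) simp
  finally show ?thesis unfolding w12_def .
qed

end

theorem lemma3p26:
  fixes V1 V2 :: "'a::{real_inner, complete_space} set"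
  assumes "closed_subspace V1" and "closed_subspace V2"
    and "\<not> V1 \<subseteq> V2" and "\<not> V2 \<subseteq> V1"
    and "cos_angle V1 V2 < 1"
  shows "\<forall>w::'a.
      (infdist w (V1 \<inter> V2))\<^sup>2 \<le> qform_inv (cos_angle V1 V2) (infdist w V1) (infdist w V2) \<and>
      (norm (orth_proj (closure {x + y | x y. x \<in> V1 \<and> y \<in> V2}) w))\<^sup>2
        \<le> qform_inv (cos_angle V1 V2) (norm (orth_proj V1 w)) (norm (orth_proj V2 w))"
proof -
  interpret twosub V1 V2 using assms by unfold_locales
  show ?thesis
    using part_a part_b qform_inv_eq[OF e_abs] unfolding f_def by simp
qed

end
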